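(* (1) Let $f:(0,\infty)\to\mathbb{R}$ be completely monotone and suppose $\int_0^{t_0}|f(t)|t^\beta\,\mathrm{d}t<\infty$ for some $\beta\in(-1,\infty)$ and $t_0>0$. Then for every $k\in\mathbb{N}$ there is $C_{k,\beta}>0$ with $$\int_0^{t_0}|f^{(k)}(t)|\,t^{k+\beta}\,\mathrm{d}t\le C_{k,\beta}\int_0^{t_0}f(t)\,t^\beta\,\mathrm{d}t.$$ (2) Let $f:(0,\infty)\to\mathbb{R}$ be smooth with $\int_0^{t_0}|f(t)|t^\beta\,\mathrm{d}t<\infty$ for some $\beta\in(-1,\infty)$ and $t_0>0$, and suppose $f'$ has constant sign. Then $$\int_0^{t_0}|f'(t)|\,t^{1+\beta}\,\mathrm{d}t\le(1+\beta)\int_0^{t_0}|f(t)|\,t^\beta\,\mathrm{d}t+|f(t_0)|\,t_0^{1+\beta}.$$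
   Context: A function $g:(0,\infty)\to\mathbb{R}$ is completely monotone if it is $C^\infty$ and $(-1)^ng^{(n)}(t)\ge0$ for all $t>0$ and $n\in\mathbb{N}$. *)

theory Defs
  imports "HOL-Analysis.Analysis"
begin

definition smooth_pos :: "(real \<Rightarrow> real) \<Rightarrow> bool" where
  "smooth_pos f \<longleftrightarrow>
     (\<forall>n t. 0 < t \<longrightarrow> ((deriv ^^ n) f has_real_derivative (deriv ^^ Suc n) f t) (at t))"

definition completely_monotone :: "(real \<Rightarrow> real) \<Rightarrow> bool" where
  "completely_monotone f \<longleftrightarrow> smooth_pos f \<and>
     (\<forall>n t. 0 < t \<longrightarrow> 0 \<le> (-1) ^ n * (deriv ^^ n) f t)"

end

theory Submission imports Defs begin

lemma nn_open_interval:
  fixes g :: "real \<Rightarrow> real"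
  assumes "a \<le> b" "\<And>x. x \<in> {a<..<b} \<Longrightarrow> 0 \<le> g x" "(g has_integral I) {a..b}"
  shows "(\<integral>\<^sup>+ t \<in> {a<..<b}. ennreal (g t) \<partial>lborel) = ennreal I"
proof -
  have "(g has_integral I) {a<..<b}"
    using has_integral_open_interval[of g I a b] assms(3) by (simp add: box_real cbox_interval)
  then show ?thesis using nn_integral_has_integral_lebesgue'[of "{a<..<b}" g I] assms(2) by simp
qed

lemma dec_bound:
  fixes F :: "real \<Rightarrow> real"
  assumes g: "\<gamma> > -1" and e: "0 < e" and mono: "\<And>s. 0 < s \<Longrightarrow> s \<le> e \<Longrightarrow> F s \<le> F e"
    and neg: "F e \<le> 0"
  shows "ennreal (\<bar>F e\<bar> * e powr (1 + \<gamma>)) \<le>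
     ennreal (1 + \<gamma>) * (\<integral>\<^sup>+ t \<in> {0<..<e}. ennreal (\<bar>F t\<bar> * t powr \<gamma>) \<partial>lborel)"
proof -
  have hi: "((\<lambda>t. \<bar>F e\<bar> * t powr \<gamma>) has_integral (\<bar>F e\<bar> * (e powr (\<gamma>+1) / (\<gamma>+1)))) {0..e}"
    using has_integral_mult_right[OF has_integral_powr_from_0[of \<gamma> e]] g e by simp
  have eq: "(\<integral>\<^sup>+ t \<in> {0<..<e}. ennreal (\<bar>F e\<bar> * t powr \<gamma>) \<partial>lborel) = ennreal (\<bar>F e\<bar> * (e powr (\<gamma>+1) / (\<gamma>+1)))"
    by (rule nn_open_interval) (use e hi in auto)
  have le: "(\<integral>\<^sup>+ t \<in> {0<..<e}. ennreal (\<bar>F e\<bar> * t powr \<gamma>) \<partial>lborel) \<le> (\<integral>\<^sup>+ t \<in> {0<..<e}. ennreal (\<bar>F t\<bar> * t powr \<gamma>) \<partial>lborel)"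
  proof (rule nn_integral_mono)
    fix t
    show "ennreal (\<bar>F e\<bar> * t powr \<gamma>) * indicator {0<..<e} t \<le> ennreal (\<bar>F t\<bar> * t powr \<gamma>) * indicator {0<..<e} t"
    proof (cases "t \<in> {0<..<e}")
      case True
      then have "\<bar>F e\<bar> \<le> \<bar>F t\<bar>" using mono[of t] neg by auto
      then show ?thesis using True by (auto intro!: ennreal_leI mult_right_mono)
    qed simp
  qed
  have "ennreal (\<bar>F e\<bar> * e powr (1 + \<gamma>)) = ennreal (1+\<gamma>) * ennreal (\<bar>F e\<bar> * (e powr (\<gamma>+1) / (\<gamma>+1)))"
    using g by (simp add: ennreal_mult'[symmetric] add.commute)
  also have "\<dots> \<le> ennreal (1 + \<gamma>) * (\<integral>\<^sup>+ t \<in> {0<..<e}. ennreal (\<bar>F t\<bar> * t powr \<gamma>) \<partial>lborel)"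
    using eq le by (metis mult_left_mono zero_le)
  finally show ?thesis .
qed

lemma limit_lemma:
  fixes \<phi> :: "real \<Rightarrow> ennreal"
  assumes t0: "t0 > 0" and meas: "(\<lambda>t. \<phi> t * indicator {0<..<t0} t) \<in> borel_measurable lborel"
    and bd: "\<And>e. 0 < e \<Longrightarrow> e < t0 \<Longrightarrow> (\<integral>\<^sup>+ t \<in> {e<..<t0}. \<phi> t \<partial>lborel) \<le> B"
  shows "(\<integral>\<^sup>+ t \<in> {0<..<t0}. \<phi> t \<partial>lborel) \<le> B"
proof -
  define f where "f = (\<lambda>(n::nat) t. (\<phi> t * indicator {0<..<t0} t) * indicator {t0 / (real n + 2)<..<t0} t)"
  have inc: "incseq f"
  proof (rule incseq_SucI, rule le_funI)
    fix n t
    have "t0 / (real (Suc n) + 2) \<le> t0 / (real n + 2)" using t0 by (simp add: frac_le)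
    then have "indicator {t0 / (real n + 2)<..<t0} t \<le> (indicator {t0 / (real (Suc n) + 2)<..<t0} t :: ennreal)"
      by (auto simp: indicator_def)
    then show "f n t \<le> f (Suc n) t" unfolding f_def by (simp add: mult_left_mono)
  qed
  have mf: "f i \<in> borel_measurable lborel" for i
    unfolding f_def using meas by measurable
  have sup: "(SUP i. f i t) = \<phi> t * indicator {0<..<t0} t" for t
  proof (cases "t \<in> {0<..<t0}")
    case True
    obtain n :: nat where n: "t0 / t < real n" using reals_Archimedean2 by blast
    have "t0 / (real n + 2) < t"
      using True n t0 by (simp add: field_simps)
    then have "f n t = \<phi> t * indicator {0<..<t0} t" using True unfolding f_def by simp
    moreover have "f i t \<le> \<phi> t * indicator {0<..<t0} t" for i
      unfolding f_def by (simp add: indicator_def)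
    ultimately show ?thesis by (metis (no_types, lifting) SUP_upper UNIV_I antisym SUP_least)
  next
    case False
    then show ?thesis unfolding f_def by simp
  qed
  have "(\<integral>\<^sup>+ t \<in> {0<..<t0}. \<phi> t \<partial>lborel) = (SUP i. integral\<^sup>N lborel (f i))"
    using nn_integral_monotone_convergence_SUP[OF inc mf] sup by simp
  also have "\<dots> \<le> B"
  proof (rule SUP_least)
    fix i
    have p: "0 < t0 / (real i + 2)" "t0 / (real i + 2) < t0" using t0 by (auto simp: field_simps add_pos_nonneg)
    have "integral\<^sup>N lborel (f i) = (\<integral>\<^sup>+ t \<in> {t0 / (real i + 2)<..<t0}. \<phi> t \<partial>lborel)"
      unfolding f_def using p by (intro nn_integral_cong) (auto simp: indicator_def)
    then show "integral\<^sup>N lborel (f i) \<le> B" using bd[OF p] by simp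
  qed
  finally show ?thesis .
qed


lemma meas_cont:
  fixes h :: "real \<Rightarrow> real"
  assumes "continuous_on {a<..<b} h"
  shows "(\<lambda>t. ennreal (h t) * indicator {a<..<b} t) \<in> borel_measurable lborel"
proof -
  have m: "(\<lambda>t. indicator {a<..<b} t *\<^sub>R h t) \<in> borel_measurable borel"
    by (rule borel_measurable_continuous_on_indicator) (use assms in auto)
  have "(\<lambda>t. ennreal (indicator {a<..<b} t *\<^sub>R h t)) \<in> borel_measurable borel"
    using m by measurable
  moreover have "(\<lambda>t. ennreal (indicator {a<..<b} t *\<^sub>R h t)) = (\<lambda>t. ennreal (h t) * indicator {a<..<b} t)"
    by (auto simp: indicator_def fun_eq_iff)
  ultimately show ?thesis by (simp add: measurable_cong_sets[OF sets_lborel refl])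
qed

lemma core:
  fixes F F' :: "real \<Rightarrow> real"
  assumes g: "\<gamma> > -1" and t0: "t0 > 0"
    and der: "\<And>t. 0 < t \<Longrightarrow> (F has_real_derivative F' t) (at t)"
    and cont: "continuous_on {0<..} F'"
    and pos: "\<And>t. 0 < t \<Longrightarrow> 0 \<le> F' t"
  shows "(\<integral>\<^sup>+ t \<in> {0<..<t0}. ennreal (F' t * t powr (1+\<gamma>)) \<partial>lborel)
    \<le> ennreal (1+\<gamma>) * (\<integral>\<^sup>+ t \<in> {0<..<t0}. ennreal (\<bar>F t\<bar> * t powr \<gamma>) \<partial>lborel)
       + ennreal (\<bar>F t0\<bar> * t0 powr (1+\<gamma>))"
    (is "_ \<le> ennreal (1+\<gamma>) * ?P0 + ?X")
proof (rule limit_lemma[OF t0])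
  have contF: "continuous_on {0<..} F"
    using der by (intro continuous_at_imp_continuous_on) (auto dest: DERIV_isCont)
  have c1: "continuous_on {0<..} (\<lambda>t. F' t * t powr (1+\<gamma>))"
    by (intro continuous_intros cont) auto
  have c2: "continuous_on {0<..} (\<lambda>t. \<bar>F t\<bar> * t powr \<gamma>)"
    by (intro continuous_intros contF) auto
  have c3: "continuous_on {0<..} (\<lambda>t. F t * t powr \<gamma>)"
    by (intro continuous_intros contF) auto
  show "(\<lambda>t. ennreal (F' t * t powr (1 + \<gamma>)) * indicator {0<..<t0} t) \<in> borel_measurable lborel"
    by (rule meas_cont) (rule continuous_on_subset[OF c1], auto)
  fix e assume e: "0 < e" "e < t0"
  have sub: "{e..t0} \<subseteq> {0<..}" using e by auto
  define G where "G t = F t * t powr (1+\<gamma>)" for t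
  have dG: "(G has_real_derivative (F' t * t powr (1+\<gamma>) + (1+\<gamma>) * (F t * t powr \<gamma>))) (at t)"
    if "0 < t" for t
  proof -
    have "(G has_real_derivative (F' t * t powr (1+\<gamma>) + F t * ((1+\<gamma>) * t powr (1+\<gamma>-1)))) (at t)"
      unfolding G_def using DERIV_mult[OF der[OF that] has_real_derivative_powr[OF that, of "1+\<gamma>"]]
      by (simp add: algebra_simps)
    then show ?thesis by (simp add: algebra_simps)
  qed
  have ftc: "((\<lambda>t. F' t * t powr (1+\<gamma>) + (1+\<gamma>) * (F t * t powr \<gamma>)) has_integral (G t0 - G e)) {e..t0}"
  proof (rule fundamental_theorem_of_calculus)
    show "e \<le> t0" using e by simp
    fix x assume "x \<in> {e..t0}"
    then have x0: "0 < x" using e by auto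
    show "(G has_vector_derivative (F' x * x powr (1+\<gamma>) + (1+\<gamma>) * (F x * x powr \<gamma>))) (at x within {e..t0})"
      using has_field_derivative_at_within[OF dG[OF x0]]
      unfolding has_real_derivative_iff_has_vector_derivative .
  qed
  have i1: "(\<lambda>t. F' t * t powr (1+\<gamma>)) integrable_on {e..t0}"
    by (rule integrable_continuous_interval, rule continuous_on_subset[OF c1 sub])
  have i2: "(\<lambda>t. \<bar>F t\<bar> * t powr \<gamma>) integrable_on {e..t0}"
    by (rule integrable_continuous_interval, rule continuous_on_subset[OF c2 sub])
  have i3: "(\<lambda>t. F t * t powr \<gamma>) integrable_on {e..t0}"
    by (rule integrable_continuous_interval, rule continuous_on_subset[OF c3 sub])
  define I1 where "I1 = integral {e..t0} (\<lambda>t. F' t * t powr (1+\<gamma>))"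
  define A where "A = integral {e..t0} (\<lambda>t. \<bar>F t\<bar> * t powr \<gamma>)"
  define J where "J = integral {e..t0} (\<lambda>t. F t * t powr \<gamma>)"
  have "((\<lambda>t. F' t * t powr (1+\<gamma>) + (1+\<gamma>) * (F t * t powr \<gamma>)) has_integral (I1 + (1+\<gamma>) * J)) {e..t0}"
    unfolding I1_def J_def
    by (rule has_integral_add[OF integrable_integral[OF i1] has_integral_mult_right[OF integrable_integral[OF i3]]])
  then have "G t0 - G e = I1 + (1+\<gamma>) * J"
    using ftc by (rule has_integral_unique[rotated])
  then have I1eq: "I1 = G t0 - G e - (1+\<gamma>) * J" by simp
  have JA: "- A \<le> J"
  proof -
    have "integral {e..t0} (\<lambda>t. - (\<bar>F t\<bar> * t powr \<gamma>)) \<le> J"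
    proof -
      have neg: "- (\<bar>F x\<bar> * x powr \<gamma>) \<le> F x * x powr \<gamma>" for x
      proof -
        have "- \<bar>F x\<bar> * x powr \<gamma> \<le> F x * x powr \<gamma>"
          by (rule mult_right_mono) auto
        then show ?thesis by simp
      qed
      show ?thesis
        unfolding J_def by (rule integral_le) (use i2 i3 neg in \<open>auto intro: integrable_neg\<close>)
    qed
    then show ?thesis unfolding A_def by simp
  qed
  have PA: "(\<integral>\<^sup>+ t \<in> {e<..<t0}. ennreal (\<bar>F t\<bar> * t powr \<gamma>) \<partial>lborel) = ennreal A"
    unfolding A_def using e by (intro nn_open_interval integrable_integral i2) auto
  have PI: "(\<integral>\<^sup>+ t \<in> {e<..<t0}. ennreal (F' t * t powr (1+\<gamma>)) \<partial>lborel) = ennreal I1"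
    unfolding I1_def using e pos by (intro nn_open_interval integrable_integral i1) auto
  have A0: "0 \<le> A" unfolding A_def by (rule integral_nonneg) (use i2 in auto)
  have Gt0: "G t0 \<le> \<bar>F t0\<bar> * t0 powr (1+\<gamma>)" unfolding G_def
    by (metis abs_ge_self abs_mult abs_of_nonneg powr_ge_zero)
  define Q where "Q = (\<integral>\<^sup>+ t \<in> {0<..<e}. ennreal (\<bar>F t\<bar> * t powr \<gamma>) \<partial>lborel)"
  have QP: "Q + ennreal A \<le> ?P0"
  proof -
    have "Q + ennreal A = (\<integral>\<^sup>+ t. ennreal (\<bar>F t\<bar> * t powr \<gamma>) * indicator {0<..<e} t
        + ennreal (\<bar>F t\<bar> * t powr \<gamma>) * indicator {e<..<t0} t \<partial>lborel)"
      unfolding Q_def PA[symmetric]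
      by (rule nn_integral_add[symmetric]; rule meas_cont; rule continuous_on_subset[OF c2]) (use e in auto)
    also have "\<dots> \<le> ?P0"
      using e by (intro nn_integral_mono) (auto simp: indicator_def)
    finally show ?thesis .
  qed
  have AP: "ennreal A \<le> ?P0"
    by (rule order_trans[OF _ QP]) simp
  have gJ: "(1+\<gamma>) * (-A) \<le> (1+\<gamma>) * J"
    using JA g by (intro mult_left_mono) auto
  have "ennreal I1 \<le> ennreal (1 + \<gamma>) * ?P0 + ?X"
  proof (cases "F e \<ge> 0")
    case True
    have "G e \<ge> 0" using True unfolding G_def by simp
    then have "I1 \<le> (1+\<gamma>) * A + \<bar>F t0\<bar> * t0 powr (1+\<gamma>)"
      using I1eq gJ Gt0 by (simp add: algebra_simps)
    then have "ennreal I1 \<le> ennreal ((1+\<gamma>) * A + \<bar>F t0\<bar> * t0 powr (1+\<gamma>))"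
      by (rule ennreal_leI)
    also have "\<dots> = ennreal (1+\<gamma>) * ennreal A + ?X"
      using g A0 by (simp add: ennreal_plus ennreal_mult)
    also have "\<dots> \<le> ennreal (1+\<gamma>) * ?P0 + ?X"
      using AP by (intro add_mono mult_left_mono order_refl) auto
    finally show ?thesis .
  next
    case False
    have mono: "F s \<le> F e" if "0 < s" "s \<le> e" for s
    proof (rule DERIV_nonneg_imp_nondecreasing[of s e F])
      fix x assume "s \<le> x" "x \<le> e"
      then have "0 < x" using that by auto
      then show "\<exists>y. (F has_real_derivative y) (at x) \<and> 0 \<le> y"
        using der pos by blast
    qed (use that in auto)
    have db: "ennreal (\<bar>F e\<bar> * e powr (1 + \<gamma>)) \<le> ennreal (1 + \<gamma>) * Q"
      unfolding Q_def using dec_bound[OF g e(1), of F] mono False by auto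
    have "G e = - (\<bar>F e\<bar> * e powr (1 + \<gamma>))" using False unfolding G_def by simp
    then have "I1 \<le> \<bar>F e\<bar> * e powr (1 + \<gamma>) + (1+\<gamma>) * A + \<bar>F t0\<bar> * t0 powr (1+\<gamma>)"
      using I1eq gJ Gt0 by (simp add: algebra_simps)
    then have "ennreal I1 \<le> ennreal (\<bar>F e\<bar> * e powr (1 + \<gamma>) + (1+\<gamma>) * A + \<bar>F t0\<bar> * t0 powr (1+\<gamma>))"
      by (rule ennreal_leI)
    also have "\<dots> = ennreal (\<bar>F e\<bar> * e powr (1 + \<gamma>)) + ennreal (1+\<gamma>) * ennreal A + ?X"
      using g A0 by (simp add: ennreal_plus ennreal_mult)
    also have "\<dots> \<le> ennreal (1+\<gamma>) * Q + ennreal (1+\<gamma>) * ennreal A + ?X"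
      using db by (intro add_mono order_refl)
    also have "\<dots> = ennreal (1+\<gamma>) * (Q + ennreal A) + ?X"
      by (simp add: distrib_left)
    also have "\<dots> \<le> ennreal (1+\<gamma>) * ?P0 + ?X"
      using QP by (intro add_mono mult_left_mono order_refl) auto
    finally show ?thesis .
  qed
  then show "(\<integral>\<^sup>+ t \<in> {e<..<t0}. ennreal (F' t * t powr (1 + \<gamma>)) \<partial>lborel) \<le> ennreal (1 + \<gamma>) * ?P0 + ?X"
    using PI by simp
qed


lemma mono_deriv:
  fixes F F' :: "real \<Rightarrow> real"
  assumes der: "\<And>t. 0 < t \<Longrightarrow> (F has_real_derivative F' t) (at t)"
    and pos: "\<And>t. 0 < t \<Longrightarrow> 0 \<le> F' t" and s: "0 < s" "s \<le> e"
  shows "F s \<le> F e"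
proof (rule DERIV_nonneg_imp_nondecreasing[of s e F])
  fix x assume "s \<le> x" "x \<le> e"
  then have "0 < x" using s by auto
  then show "\<exists>y. (F has_real_derivative y) (at x) \<and> 0 \<le> y"
    using der pos by blast
qed (use s in auto)

lemma smooth_der:
  assumes "smooth_pos f" "0 < t"
  shows "((deriv ^^ n) f has_real_derivative (deriv ^^ Suc n) f t) (at t)"
  using assms unfolding smooth_pos_def by blast

lemma smooth_cont:
  assumes "smooth_pos f"
  shows "continuous_on {0<..} ((deriv ^^ n) f)"
  by (rule continuous_at_imp_continuous_on) (use smooth_der[OF assms] in \<open>auto dest: DERIV_isCont\<close>)

lemma step:
  assumes cm: "completely_monotone f" and g: "\<gamma> > -1" and t0: "t0 > 0"
  shows "(\<integral>\<^sup>+ t \<in> {0<..<t0}. ennreal (\<bar>(deriv ^^ Suc k) f t\<bar> * t powr (1 + \<gamma>)) \<partial>lborel)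
     \<le> ennreal (2 * (1 + \<gamma>)) * (\<integral>\<^sup>+ t \<in> {0<..<t0}. ennreal (\<bar>(deriv ^^ k) f t\<bar> * t powr \<gamma>) \<partial>lborel)"
proof -
  have sm: "smooth_pos f" and sgn: "\<And>n t. 0 < t \<Longrightarrow> 0 \<le> (-1) ^ n * (deriv ^^ n) f t"
    using cm unfolding completely_monotone_def by auto
  define F where "F t = - ((-1) ^ k * (deriv ^^ k) f t)" for t
  define F' where "F' t = (-1) ^ Suc k * (deriv ^^ Suc k) f t" for t
  have der: "(F has_real_derivative F' t) (at t)" if "0 < t" for t
  proof -
    have "(F has_real_derivative - ((-1) ^ k * (deriv ^^ Suc k) f t)) (at t)"
      unfolding F_def by (intro DERIV_minus DERIV_cmult smooth_der[OF sm that])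
    then show ?thesis unfolding F'_def by simp
  qed
  have cont: "continuous_on {0<..} F'"
    unfolding F'_def by (intro continuous_intros smooth_cont[OF sm])
  have pos: "0 \<le> F' t" if "0 < t" for t unfolding F'_def using sgn[OF that] .
  have absF: "\<bar>F t\<bar> = \<bar>(deriv ^^ k) f t\<bar>" for t unfolding F_def by (simp add: abs_mult)
  have absF': "F' t = \<bar>(deriv ^^ Suc k) f t\<bar>" if "0 < t" for t
  proof -
    have "\<bar>F' t\<bar> = \<bar>(deriv ^^ Suc k) f t\<bar>" unfolding F'_def by (simp add: abs_mult)
    then show ?thesis using pos[OF that] by simp
  qed
  define P where "P = (\<integral>\<^sup>+ t \<in> {0<..<t0}. ennreal (\<bar>(deriv ^^ k) f t\<bar> * t powr \<gamma>) \<partial>lborel)"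
  have c: "(\<integral>\<^sup>+ t \<in> {0<..<t0}. ennreal (F' t * t powr (1+\<gamma>)) \<partial>lborel)
    \<le> ennreal (1+\<gamma>) * (\<integral>\<^sup>+ t \<in> {0<..<t0}. ennreal (\<bar>F t\<bar> * t powr \<gamma>) \<partial>lborel)
       + ennreal (\<bar>F t0\<bar> * t0 powr (1+\<gamma>))"
    by (rule core[OF g t0 der cont pos])
  have d: "ennreal (\<bar>F t0\<bar> * t0 powr (1 + \<gamma>)) \<le>
     ennreal (1 + \<gamma>) * (\<integral>\<^sup>+ t \<in> {0<..<t0}. ennreal (\<bar>F t\<bar> * t powr \<gamma>) \<partial>lborel)"
    by (rule dec_bound[OF g t0]) (use mono_deriv[OF der pos] sgn[OF t0, of k] in \<open>auto simp: F_def\<close>)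
  have e1: "(\<integral>\<^sup>+ t \<in> {0<..<t0}. ennreal (\<bar>F t\<bar> * t powr \<gamma>) \<partial>lborel) = P"
    unfolding P_def absF ..
  have e2: "(\<integral>\<^sup>+ t \<in> {0<..<t0}. ennreal (F' t * t powr (1+\<gamma>)) \<partial>lborel)
     = (\<integral>\<^sup>+ t \<in> {0<..<t0}. ennreal (\<bar>(deriv ^^ Suc k) f t\<bar> * t powr (1 + \<gamma>)) \<partial>lborel)"
    by (rule nn_integral_cong) (auto simp: indicator_def absF')
  have "ennreal (2 * (1 + \<gamma>)) = ennreal (1 + \<gamma>) + ennreal (1 + \<gamma>)"
    using g by (simp add: ennreal_plus[symmetric])
  then have e3: "ennreal (2 * (1 + \<gamma>)) * P = ennreal (1 + \<gamma>) * P + ennreal (1 + \<gamma>) * P"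
    by (simp add: distrib_right)
  show ?thesis
    using c d unfolding e1 e2 e3 P_def[symmetric] by (meson add_left_mono order_trans)
qed


lemma part1:
  assumes b: "\<beta> > -1"
  shows "\<exists>C::real. C > 0 \<and>
        (\<forall>(f::real \<Rightarrow> real) (t0::real).
           completely_monotone f \<longrightarrow> t0 > 0 \<longrightarrow>
           (\<integral>\<^sup>+ t \<in> {0<..<t0}. ennreal (\<bar>(deriv ^^ k) f t\<bar> * t powr (real k + \<beta>)) \<partial>lborel)
             \<le> ennreal C * (\<integral>\<^sup>+ t \<in> {0<..<t0}. ennreal (f t * t powr \<beta>) \<partial>lborel))"
proof (induction k)
  case 0
  show ?case
  proof (intro exI[of _ 1] conjI allI impI)
    fix f :: "real \<Rightarrow> real" and t0 :: real
    assume cm: "completely_monotone f" and "t0 > 0"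
    have "f t \<ge> 0" if "0 < t" for t
      using cm that unfolding completely_monotone_def by (metis funpow_0 mult_1 power_0)
    then have "(\<integral>\<^sup>+ t \<in> {0<..<t0}. ennreal (\<bar>f t\<bar> * t powr \<beta>) \<partial>lborel)
             = (\<integral>\<^sup>+ t \<in> {0<..<t0}. ennreal (f t * t powr \<beta>) \<partial>lborel)"
      by (intro nn_integral_cong) (auto simp: indicator_def)
    then show "(\<integral>\<^sup>+ t \<in> {0<..<t0}. ennreal (\<bar>(deriv ^^ 0) f t\<bar> * t powr (real 0 + \<beta>)) \<partial>lborel)
             \<le> ennreal 1 * (\<integral>\<^sup>+ t \<in> {0<..<t0}. ennreal (f t * t powr \<beta>) \<partial>lborel)"
      by simp
  qed simp
next
  case (Suc k)
  then obtain C where C: "C > 0" and hC: "\<And>f t0. completely_monotone f \<Longrightarrow> t0 > 0 \<Longrightarrow>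
           (\<integral>\<^sup>+ t \<in> {0<..<t0}. ennreal (\<bar>(deriv ^^ k) f t\<bar> * t powr (real k + \<beta>)) \<partial>lborel)
             \<le> ennreal C * (\<integral>\<^sup>+ t \<in> {0<..<t0}. ennreal (f t * t powr \<beta>) \<partial>lborel)" by blast
  have g: "real k + \<beta> > -1" using b by simp
  show ?case
  proof (intro exI[of _ "2 * (1 + (real k + \<beta>)) * C"] conjI allI impI)
    show "0 < 2 * (1 + (real k + \<beta>)) * C" using g C by simp
    fix f :: "real \<Rightarrow> real" and t0 :: real
    assume cm: "completely_monotone f" and t0: "t0 > 0"
    have ex: "real (Suc k) + \<beta> = 1 + (real k + \<beta>)" by simp
    have "(\<integral>\<^sup>+ t \<in> {0<..<t0}. ennreal (\<bar>(deriv ^^ Suc k) f t\<bar> * t powr (real (Suc k) + \<beta>)) \<partial>lborel)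
       \<le> ennreal (2 * (1 + (real k + \<beta>))) * (\<integral>\<^sup>+ t \<in> {0<..<t0}. ennreal (\<bar>(deriv ^^ k) f t\<bar> * t powr (real k + \<beta>)) \<partial>lborel)"
      unfolding ex by (rule step[OF cm g t0])
    also have "\<dots> \<le> ennreal (2 * (1 + (real k + \<beta>))) * (ennreal C * (\<integral>\<^sup>+ t \<in> {0<..<t0}. ennreal (f t * t powr \<beta>) \<partial>lborel))"
      by (intro mult_left_mono hC[OF cm t0]) simp
    also have "\<dots> = ennreal (2 * (1 + (real k + \<beta>)) * C) * (\<integral>\<^sup>+ t \<in> {0<..<t0}. ennreal (f t * t powr \<beta>) \<partial>lborel)"
      using g C by (simp add: ennreal_mult mult.assoc)
    finally show "(\<integral>\<^sup>+ t \<in> {0<..<t0}. ennreal (\<bar>(deriv ^^ Suc k) f t\<bar> * t powr (real (Suc k) + \<beta>)) \<partial>lborel)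
       \<le> ennreal (2 * (1 + (real k + \<beta>)) * C) * (\<integral>\<^sup>+ t \<in> {0<..<t0}. ennreal (f t * t powr \<beta>) \<partial>lborel)" .
  qed
qed

lemma part2:
  fixes f :: "real \<Rightarrow> real"
  assumes sm: "smooth_pos f" and b: "\<beta> > -1" and t0: "t0 > 0"
    and sg: "(\<forall>t>0. deriv f t \<ge> 0) \<or> (\<forall>t>0. deriv f t \<le> 0)"
  shows "(\<integral>\<^sup>+ t \<in> {0<..<t0}. ennreal (\<bar>deriv f t\<bar> * t powr (1 + \<beta>)) \<partial>lborel)
        \<le> ennreal (1 + \<beta>) * (\<integral>\<^sup>+ t \<in> {0<..<t0}. ennreal (\<bar>f t\<bar> * t powr \<beta>) \<partial>lborel)
           + ennreal (\<bar>f t0\<bar> * t0 powr (1 + \<beta>))"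
proof -
  have d0: "(f has_real_derivative deriv f t) (at t)" if "0 < t" for t
    using smooth_der[OF sm that, of 0] by simp
  have c0: "continuous_on {0<..} (deriv f)"
    using smooth_cont[OF sm, of 1] by simp
  from sg show ?thesis
  proof
    assume p: "\<forall>t>0. deriv f t \<ge> 0"
    have "(\<integral>\<^sup>+ t \<in> {0<..<t0}. ennreal (\<bar>deriv f t\<bar> * t powr (1 + \<beta>)) \<partial>lborel)
       = (\<integral>\<^sup>+ t \<in> {0<..<t0}. ennreal (deriv f t * t powr (1 + \<beta>)) \<partial>lborel)"
      using p by (intro nn_integral_cong) (auto simp: indicator_def)
    also have "\<dots> \<le> ennreal (1 + \<beta>) * (\<integral>\<^sup>+ t \<in> {0<..<t0}. ennreal (\<bar>f t\<bar> * t powr \<beta>) \<partial>lborel)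
           + ennreal (\<bar>f t0\<bar> * t0 powr (1 + \<beta>))"
      by (rule core[OF b t0 d0 c0]) (use p in auto)
    finally show ?thesis .
  next
    assume p: "\<forall>t>0. deriv f t \<le> 0"
    have "(\<integral>\<^sup>+ t \<in> {0<..<t0}. ennreal (\<bar>deriv f t\<bar> * t powr (1 + \<beta>)) \<partial>lborel)
       = (\<integral>\<^sup>+ t \<in> {0<..<t0}. ennreal (- deriv f t * t powr (1 + \<beta>)) \<partial>lborel)"
      using p by (intro nn_integral_cong) (auto simp: indicator_def)
    also have "\<dots> \<le> ennreal (1 + \<beta>) * (\<integral>\<^sup>+ t \<in> {0<..<t0}. ennreal (\<bar>- f t\<bar> * t powr \<beta>) \<partial>lborel)
           + ennreal (\<bar>- f t0\<bar> * t0 powr (1 + \<beta>))"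
      by (rule core[OF b t0]) (use p d0 c0 in \<open>auto intro: DERIV_minus continuous_intros\<close>)
    finally show ?thesis by simp
  qed
qed

theorem lemma6p4:
  shows
  "(\<forall>(k::nat) (\<beta>::real). \<beta> > -1 \<longrightarrow>
      (\<exists>C::real. C > 0 \<and>
        (\<forall>(f::real \<Rightarrow> real) (t0::real).
           completely_monotone f \<longrightarrow> t0 > 0 \<longrightarrow>
           (\<integral>\<^sup>+ t \<in> {0<..<t0}. ennreal (\<bar>f t\<bar> * t powr \<beta>) \<partial>lborel) < \<infinity> \<longrightarrow>
           (\<integral>\<^sup>+ t \<in> {0<..<t0}. ennreal (\<bar>(deriv ^^ k) f t\<bar> * t powr (real k + \<beta>)) \<partial>lborel)
             \<le> ennreal C * (\<integral>\<^sup>+ t \<in> {0<..<t0}. ennreal (f t * t powr \<beta>) \<partial>lborel))))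
   \<and>
   (\<forall>(f::real \<Rightarrow> real) (\<beta>::real) (t0::real).
      smooth_pos f \<longrightarrow> \<beta> > -1 \<longrightarrow> t0 > 0 \<longrightarrow>
      (\<integral>\<^sup>+ t \<in> {0<..<t0}. ennreal (\<bar>f t\<bar> * t powr \<beta>) \<partial>lborel) < \<infinity> \<longrightarrow>
      ((\<forall>t>0. deriv f t \<ge> 0) \<or> (\<forall>t>0. deriv f t \<le> 0)) \<longrightarrow>
      (\<integral>\<^sup>+ t \<in> {0<..<t0}. ennreal (\<bar>deriv f t\<bar> * t powr (1 + \<beta>)) \<partial>lborel)
        \<le> ennreal (1 + \<beta>) * (\<integral>\<^sup>+ t \<in> {0<..<t0}. ennreal (\<bar>f t\<bar> * t powr \<beta>) \<partial>lborel)
           + ennreal (\<bar>f t0\<bar> * t0 powr (1 + \<beta>)))"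
proof (intro conjI allI impI)
  fix k :: nat and \<beta> :: real assume "\<beta> > -1"
  from part1[OF this, of k] show "\<exists>C::real. C > 0 \<and>
        (\<forall>(f::real \<Rightarrow> real) (t0::real).
           completely_monotone f \<longrightarrow> t0 > 0 \<longrightarrow>
           (\<integral>\<^sup>+ t \<in> {0<..<t0}. ennreal (\<bar>f t\<bar> * t powr \<beta>) \<partial>lborel) < \<infinity> \<longrightarrow>
           (\<integral>\<^sup>+ t \<in> {0<..<t0}. ennreal (\<bar>(deriv ^^ k) f t\<bar> * t powr (real k + \<beta>)) \<partial>lborel)
             \<le> ennreal C * (\<integral>\<^sup>+ t \<in> {0<..<t0}. ennreal (f t * t powr \<beta>) \<partial>lborel))"
    by blast
next
  fix f :: "real \<Rightarrow> real" and \<beta> t0 :: real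
  assume "smooth_pos f" "\<beta> > -1" "t0 > 0"
    "(\<forall>t>0. deriv f t \<ge> 0) \<or> (\<forall>t>0. deriv f t \<le> 0)"
  then show "(\<integral>\<^sup>+ t \<in> {0<..<t0}. ennreal (\<bar>deriv f t\<bar> * t powr (1 + \<beta>)) \<partial>lborel)
        \<le> ennreal (1 + \<beta>) * (\<integral>\<^sup>+ t \<in> {0<..<t0}. ennreal (\<bar>f t\<bar> * t powr \<beta>) \<partial>lborel)
           + ennreal (\<bar>f t0\<bar> * t0 powr (1 + \<beta>))"
    by (rule part2)
qed

end
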